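(* Let $x,y\in B$ with $|x|=|y|$, $\delta(x)=3$ and $\delta(y)=1$. Then $s([x]_2)<s([y]_2)$.
   Context: Stern's sequence $(a(n))_{n\ge0}$: $a(0)=0$, $a(1)=1$, $a(2n)=a(n)$, $a(2n+1)=a(n)+a(n+1)$; $s(n)=a(n+1)$. For a binary string $x$, $[x]_2$ is the integer it represents in base 2 and $|x|$ its length. $B$ denotes the set of nonempty binary strings that are concatenations of blocks each equal to $10$ or $100$; for $x\in B$, $\delta(x)$ is the number of $0$s minus the number of $1$s in $x$, which equals the number of $100$ blocks. *)

theory Defs
  imports Main
begin

function stern :: "nat \<Rightarrow> nat" where
  "stern n = (if n = 0 then 0 else if n = 1 then 1
              else if even n then stern (n div 2)
              else stern (n div 2) + stern (n div 2 + 1))"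
  by auto
termination by (relation "measure id") (auto elim: oddE)
declare stern.simps[simp del]

definition s :: "nat \<Rightarrow> nat" where "s n = stern (n + 1)"

text \<open>Binary strings as lists of bits, most significant bit first (True = 1).\<close>
definition bin_val :: "bool list \<Rightarrow> nat" where
  "bin_val x = foldl (\<lambda>acc b. 2 * acc + (if b then 1 else 0)) 0 x"

inductive inB :: "bool list \<Rightarrow> bool" where
  blk10: "inB [True, False]"
| blk100: "inB [True, False, False]"
| cons10: "inB x \<Longrightarrow> inB ([True, False] @ x)"
| cons100: "inB x \<Longrightarrow> inB ([True, False, False] @ x)"

definition delta :: "bool list \<Rightarrow> int" where
  "delta x = int (count_list x False) - int (count_list x True)"

end

theory Submission
  imports Defs Complex_Main
begin

lemma stern_even: "stern (2*n) = stern n"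
  by (cases "n = 0") (simp add: stern.simps, subst stern.simps, simp)

lemma stern_odd: "stern (2*n+1) = stern n + stern (n+1)"
proof (cases "n = 0")
  case True thus ?thesis by (simp add: stern.simps)
next
  case False thus ?thesis by (subst stern.simps) simp
qed

fun stp :: "nat \<times> nat \<Rightarrow> bool \<Rightarrow> nat \<times> nat" where
  "stp (p,q) b = (if b then (p+q,q) else (p,p+q))"

definition run :: "bool list \<Rightarrow> nat \<times> nat \<Rightarrow> nat \<times> nat" where
  "run w v = foldl stp v w"

lemma run_stern: "run w (0,1) = (stern (bin_val w), stern (bin_val w + 1))"
proof (induction w rule: rev_induct)
  case Nil thus ?case by (simp add: run_def bin_val_def stern.simps)
next
  case (snoc b w)
  have bv: "bin_val (w@[b]) = 2 * bin_val w + (if b then 1 else 0)"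
    by (simp add: bin_val_def)
  have r: "run (w@[b]) (0,1) = stp (stern (bin_val w), stern (bin_val w + 1)) b"
    using snoc by (simp add: run_def)
  show ?case
  proof (cases b)
    case True
    have "stern (2 * bin_val w + 1 + 1) = stern (bin_val w + 1)"
      using stern_even[of "bin_val w + 1"] by (simp add: algebra_simps)
    thus ?thesis using r True bv stern_odd[of "bin_val w"]
      by simp
  next
    case False
    thus ?thesis using r bv stern_odd[of "bin_val w"] stern_even[of "bin_val w"]
      by simp
  qed
qed

definition phi :: real where "phi = (1 + sqrt 5) / 2"

lemma phi_sq: "phi^2 = phi + 1"
  unfolding phi_def by (simp add: power2_eq_square field_simps)

lemma phi_pos: "phi > 1"
proof -
  have "sqrt 5 > 1" by simp
  thus ?thesis unfolding phi_def by simp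
qed

definition Ph :: "nat \<times> nat \<Rightarrow> real" where
  "Ph v = real (fst v) + phi * real (snd v)"

definition cc :: real where "cc = (5 + 13*phi) / (2 + 3*phi)"
definition dd :: real where "dd = (1 + 3*phi) / phi"

lemma run10: "run ([True,False] @ x) (p,q) = run x (p+q, p+2*q)"
proof -
  have "(p+q, p+q+q) = (p+q, p+2*q)" by simp
  show ?thesis by (simp add: run_def) (rule arg_cong[where f="\<lambda>v. foldl stp v x"], simp)
qed
lemma run100: "run ([True,False,False] @ x) (p,q) = run x (p+q, 2*p+3*q)"
proof -
  have "(p+q, p+q+(p+q+q)) = (p+q, 2*p+3*q)" by simp
  show ?thesis by (simp add: run_def) (rule arg_cong[where f="\<lambda>v. foldl stp v x"], simp)
qed

lemma Ph_M: "Ph (p+q, p+2*q) = phi^2 * Ph (p,q)"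
proof -
  have "phi^2 * (real p + phi * real q) = (1+phi)*real p + (2*phi+1)*real q"
    using phi_sq by (simp add: power2_eq_square) algebra
  thus ?thesis unfolding Ph_def by (simp add: algebra_simps)
qed

lemma Ph_N_up: assumes "3*p \<le> 2*q" shows "Ph (p+q, 2*p+3*q) \<le> cc * Ph (p,q)"
proof -
  have h: "3 * real p \<le> 2 * real q" using assms by (metis of_nat_le_iff of_nat_mult of_nat_numeral)
  have pp: "2 + 3*phi > 0" using phi_pos by simp
  have e1: "(2+3*phi)*(real (p+q) + phi * real (2*p+3*q)) = (8+13*phi)*real p + (11+18*phi)*real q"
    using phi_sq by (simp add: power2_eq_square) algebra
  have e2: "(5+13*phi)*(real p + phi*real q) = (5+13*phi)*real p + (13+18*phi)*real q"
    using phi_sq by (simp add: power2_eq_square) algebra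
  have "(2+3*phi)*(real (p+q) + phi * real (2*p+3*q)) \<le> (5+13*phi)*(real p + phi*real q)"
    unfolding e1 e2 using h by (simp add: algebra_simps)
  hence "real (p+q) + phi * real (2*p+3*q) \<le> (5+13*phi)*(real p + phi*real q) / (2+3*phi)"
    using pp by (simp add: field_simps)
  thus ?thesis unfolding Ph_def cc_def by simp
qed

lemma Ph_N_lo: "dd * Ph (p,q) \<le> Ph (p+q, 2*p+3*q)"
proof -
  have pp: "phi > 0" using phi_pos by simp
  have e1: "phi*(real (p+q) + phi * real (2*p+3*q)) = (3*phi+2)*real p + (4*phi+3) * real q"
    using phi_sq by (simp add: power2_eq_square) algebra
  have e2: "(1+3*phi)*(real p + phi*real q) = (1+3*phi)*real p + (4*phi+3)*real q"
    using phi_sq by (simp add: power2_eq_square) algebra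
  have "(1+3*phi)*(real p + phi*real q) \<le> phi*(real (p+q) + phi * real (2*p+3*q))"
  proof -
    have "(1+3*phi)*real p \<le> (3*phi+2)*real p" by (rule mult_right_mono) auto
    thus ?thesis unfolding e1 e2 by simp
  qed
  hence "(1+3*phi)*(real p + phi*real q)/phi \<le> real (p+q) + phi * real (2*p+3*q)"
    using pp by (simp add: field_simps)
  thus ?thesis unfolding Ph_def dd_def by simp
qed

lemma counts: "inB x \<Longrightarrow> count_list x True \<le> count_list x False \<and> count_list x False \<le> 2 * count_list x True"
  by (induction rule: inB.induct) auto

lemma main_inv:
  assumes "inB x"
  shows "\<And>p q. 0 < q \<Longrightarrow> 3*p < 2*q \<Longrightarrow>
    0 < snd (run x (p,q)) \<and> 3 * fst (run x (p,q)) < 2 * snd (run x (p,q))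
    \<and> snd (run x (p,q)) \<le> 3 * fst (run x (p,q))
    \<and> Ph (run x (p,q)) \<le> (phi^2)^(2*count_list x True - count_list x False)
          * cc^(count_list x False - count_list x True) * Ph (p,q)
    \<and> (phi^2)^(2*count_list x True - count_list x False)
          * dd^(count_list x False - count_list x True) * Ph (p,q) \<le> Ph (run x (p,q))"
  using assms
proof (induction rule: inB.induct)
  case (blk10 p q)
  have r: "run [True,False] (p,q) = (p+q,p+2*q)" by (simp add: run_def)
  show ?case using blk10 unfolding r using Ph_M[of p q] by simp
next
  case (blk100 p q)
  have r: "run [True,False,False] (p,q) = (p+q,2*p+3*q)" by (simp add: run_def)
  show ?case using blk100 unfolding r using Ph_N_up[of p q] Ph_N_lo[of p q] by simp
next
  case (cons10 x p q)
  from cons10.prems have c: "0 < p+2*q" "3*(p+q) < 2*(p+2*q)" by auto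
  note IH = cons10.IH[OF c]
  note ct = counts[OF cons10.hyps]
  define T where "T = count_list x True"
  define F where "F = count_list x False"
  have e1: "2*count_list ([True,False]@x) True - count_list ([True,False]@x) False = Suc (2*T - F)"
    using ct unfolding T_def F_def by (simp add: Suc_diff_le)
  have e2: "count_list ([True,False]@x) False - count_list ([True,False]@x) True = F - T"
    unfolding T_def F_def by simp
  show ?case unfolding run10 e1 e2 using IH unfolding Ph_M T_def[symmetric] F_def[symmetric]
    by (simp add: algebra_simps)
next
  case (cons100 x p q)
  from cons100.prems have c: "0 < 2*p+3*q" "3*(p+q) < 2*(2*p+3*q)" by auto
  note IH = cons100.IH[OF c]
  note ct = counts[OF cons100.hyps]
  define T where "T = count_list x True"
  define F where "F = count_list x False"
  have e1: "2*count_list ([True,False,False]@x) True - count_list ([True,False,False]@x) False = 2*T - F"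
    using ct unfolding T_def F_def by simp
  have e2: "count_list ([True,False,False]@x) False - count_list ([True,False,False]@x) True = Suc (F - T)"
    using ct unfolding T_def F_def by (simp add: Suc_diff_le)
  have up: "Ph (p+q, 2*p+3*q) \<le> cc * Ph (p,q)" using cons100.prems by (intro Ph_N_up) simp
  have lo: "dd * Ph (p,q) \<le> Ph (p+q, 2*p+3*q)" by (rule Ph_N_lo)
  have nn1: "0 \<le> (phi^2)^(2*T - F) * cc^(F - T)" using phi_pos unfolding cc_def by simp
  have nn2: "0 \<le> (phi^2)^(2*T - F) * dd^(F - T)" using phi_pos unfolding dd_def by simp
  have A: "Ph (run x (p+q, 2*p+3*q)) \<le> (phi^2)^(2*T - F) * cc^(Suc (F - T)) * Ph (p,q)"
  proof -
    have "Ph (run x (p+q, 2*p+3*q)) \<le> (phi^2)^(2*T - F) * cc^(F - T) * Ph (p+q, 2*p+3*q)"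
      using IH unfolding T_def F_def by simp
    also have "\<dots> \<le> (phi^2)^(2*T - F) * cc^(F - T) * (cc * Ph (p,q))"
      by (rule mult_left_mono[OF up nn1])
    finally show ?thesis by (simp add: algebra_simps)
  qed
  have B: "(phi^2)^(2*T - F) * dd^(Suc (F - T)) * Ph (p,q) \<le> Ph (run x (p+q, 2*p+3*q))"
  proof -
    have "(phi^2)^(2*T - F) * dd^(Suc (F - T)) * Ph (p,q) = (phi^2)^(2*T - F) * dd^(F - T) * (dd * Ph (p,q))"
      by (simp add: algebra_simps)
    also have "\<dots> \<le> (phi^2)^(2*T - F) * dd^(F - T) * Ph (p+q, 2*p+3*q)"
      by (rule mult_left_mono[OF lo nn2])
    also have "\<dots> \<le> Ph (run x (p+q, 2*p+3*q))"
      using IH unfolding T_def F_def by simp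
    finally show ?thesis .
  qed
  show ?case unfolding run100 e1 e2 using IH A B by simp
qed


lemma count_len: "count_list x True + count_list x False = length (x::bool list)"
  by (induction x) auto

lemma key_const: "cc^3 / (1+3*phi) \<le> (phi^2)^3 * dd / (2+3*phi)"
proof -
  have ps: "phi*phi = phi + 1" using phi_sq by (simp add: power2_eq_square)
  have id: "phi^5*(1+3*phi)^2*(2+3*phi)^2 - (5+13*phi)^3 = 78+81*phi"
    using ps by algebra
  have K: "(5+13*phi)^3 \<le> phi^5*(1+3*phi)^2*(2+3*phi)^2"
    using id phi_pos by linarith
  have p0: "phi > 0" using phi_pos by simp
  define a where "a = (5+13*phi)^3"
  define b where "b = (2+3*phi)^3*(1+3*phi)"
  define c where "c = phi^5*(1+3*phi)"
  define d where "d = 2+3*phi"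
  have b0: "b > 0" unfolding b_def using p0 by simp
  have d0: "d > 0" unfolding d_def using p0 by simp
  have L: "cc^3/(1+3*phi) = a/b" unfolding cc_def a_def b_def by (simp add: power_divide)
  have R0: "(phi^2)^3*dd = phi^5*(1+3*phi)" unfolding dd_def using p0
    by (simp add: field_simps eval_nat_numeral)
  have R: "(phi^2)^3*dd/(2+3*phi) = c/d" unfolding c_def d_def R0 by simp
  have "a*d \<le> c*b"
  proof -
    have "a * d \<le> (phi^5*(1+3*phi)^2*(2+3*phi)^2) * d"
      using K d0 unfolding a_def by (intro mult_right_mono) auto
    also have "\<dots> = c*b" unfolding c_def b_def d_def by (simp add: power2_eq_square power3_eq_cube)
    finally show ?thesis .
  qed
  hence "a/b \<le> c/d" using b0 d0 by (simp add: divide_simps mult.commute)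
  thus ?thesis using L R by simp
qed

theorem mainTheorem12:
  assumes "inB x" and "inB y" and "length x = length y"
    and "delta x = 3" and "delta y = 1"
  shows "s (bin_val x) < s (bin_val y)"
proof -
  define Tx where "Tx = count_list x True"
  define Fx where "Fx = count_list x False"
  define Ty where "Ty = count_list y True"
  define Fy where "Fy = count_list y False"
  have f1: "Fx = Tx + 3" using assms(4) unfolding delta_def Tx_def Fx_def by linarith
  have f2: "Fy = Ty + 1" using assms(5) unfolding delta_def Ty_def Fy_def by linarith
  have l: "Tx + Fx = Ty + Fy" using assms(3) count_len[of x] count_len[of y]
    unfolding Tx_def Fx_def Ty_def Fy_def by simp
  have ty: "Ty = Tx + 1" using f1 f2 l by simp
  have t3: "Tx \<ge> 3" using counts[OF assms(1)] f1 unfolding Tx_def Fx_def by simp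
  define n where "n = Tx - 3"
  have ex1: "2*Tx - Fx = n" "Fx - Tx = 3" using f1 t3 unfolding n_def by auto
  have ey1: "2*Ty - Fy = n + 3" "Fy - Ty = 1" using f1 f2 ty t3 unfolding n_def by auto
  obtain px qx where rx: "run x (0,1) = (px,qx)" by fastforce
  obtain py qy where ry: "run y (0,1) = (py,qy)" by fastforce
  have Ix: "0 < qx \<and> 3*px < 2*qx \<and> qx \<le> 3*px \<and>
        Ph (px,qx) \<le> (phi^2)^n * cc^3 * Ph(0,1)"
    using main_inv[OF assms(1), of 1 0] rx ex1 unfolding Tx_def Fx_def by simp
  have Iy: "0 < qy \<and> 3*py < 2*qy \<and>
        (phi^2)^(n+3) * dd^1 * Ph(0,1) \<le> Ph (py,qy)"
    using main_inv[OF assms(2), of 1 0] ry ey1 unfolding Ty_def Fy_def by simp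
  have sx: "s (bin_val x) = qx" using run_stern[of x] rx unfolding s_def by simp
  have sy: "s (bin_val y) = qy" using run_stern[of y] ry unfolding s_def by simp
  have P01: "Ph (0,1) = phi" unfolding Ph_def by simp
  have p0: "phi > 0" using phi_pos by simp
  define A where "A = (phi^2)^n"
  have A0: "A \<ge> 0" unfolding A_def by simp
  have hx1: "real qx \<le> 3 * real px" using Ix by (metis of_nat_le_iff of_nat_mult of_nat_numeral)
  have hy1: "3 * real py < 2 * real qy" using Iy by (metis of_nat_less_iff of_nat_mult of_nat_numeral)
  have X: "real qx * (1+3*phi) \<le> 3 * (A * cc^3 * phi)"
  proof -
    have "real qx * (1+3*phi) \<le> 3 * Ph (px,qx)"
      unfolding Ph_def using hx1 p0 by (simp add: algebra_simps)
    also have "\<dots> \<le> 3 * (A * cc^3 * phi)" using Ix P01 unfolding A_def by simp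
    finally show ?thesis .
  qed
  have Y: "3 * (A * (phi^2)^3 * dd * phi) < real qy * (2+3*phi)"
  proof -
    have "3 * (A * (phi^2)^3 * dd * phi) \<le> 3 * Ph (py,qy)"
      using Iy P01 unfolding A_def by (simp add: power_add algebra_simps)
    also have "\<dots> < real qy * (2+3*phi)"
      unfolding Ph_def using hy1 p0 by (simp add: algebra_simps)
    finally show ?thesis .
  qed
  have "real qx \<le> 3 * A * phi * (cc^3 / (1+3*phi))"
    using X p0 by (simp add: field_simps)
  also have "\<dots> \<le> 3 * A * phi * ((phi^2)^3 * dd / (2+3*phi))"
    using key_const A0 p0 by (intro mult_left_mono) auto
  also have "\<dots> < real qy"
    using Y p0 by (simp add: field_simps)
  finally have "real qx < real qy" .
  thus ?thesis using sx sy by simp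
qed

end
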